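(* Let $p$ be an odd prime and $i$ an integer with $1\leq i<p-1$. For an integer $1\leq l\leq i+1$ set \[G_i(l)=\sum_{k=1}^l(-1)^{k-1}(k-1)!{l \brace k}_{\leq i}+\frac{p\cdot l!}{(l+p-1)!}{l+p-1 \brace p}_{\leq i}.\] Then $G_i(l)\in\mathbb{Z}_{(p)}$ with $G_i(l)\equiv -1\pmod p$ if $l=i+1$, and $G_i(l)\equiv 0\pmod p$ if $l\leq i$ (i.e. $G_i(l)=-1+O(p)$, resp. $O(p)$).
   Context: For integers $N\geq k\geq 0$ and $r\geq1$, the $r$-restricted Stirling number of the second kind is ${N \brace k}_{\leq r}=\sum \frac{N!}{\prod_{m=1}^{r} j_m!\,(m!)^{j_m}}$, the sum over $(j_1,\dots,j_r)\in\mathbb{N}^r$ with $\sum_m j_m=k$ and $\sum_m m j_m=N$; equivalently the number of partitions of an $N$-element set into $k$ nonempty blocks each of size at most $r$. $O(p)$ means an element of $p\mathbb{Z}_{(p)}$. *)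

theory Defs
  imports Complex_Main "HOL-Computational_Algebra.Primes" "HOL-Library.FuncSet"
begin

text \<open>r-restricted Stirling number of the second kind, via the defining formula:
  sum over (j_1,...,j_r) in N^r with sum j_m = k and sum m*j_m = N of
  N! / prod_{m=1..r} (j_m! (m!)^(j_m)).  Since m*j_m <= N, each j_m ranges in {0..N}.\<close>
definition rstirling :: "nat \<Rightarrow> nat \<Rightarrow> nat \<Rightarrow> rat" where
  "rstirling N k r =
     (\<Sum>j \<in> {j \<in> PiE {1..r} (\<lambda>_. {0..N}).
              (\<Sum>m=1..r. j m) = k \<and> (\<Sum>m=1..r. m * j m) = N}.
        of_nat (fact N) / (\<Prod>m=1..r. of_nat (fact (j m)) * of_nat (fact m) ^ (j m)))"

definition in_Zp :: "nat \<Rightarrow> rat \<Rightarrow> bool" where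
  "in_Zp p q \<longleftrightarrow> (\<exists>a b :: int. \<not> int p dvd b \<and> q = of_int a / of_int b)"

definition bigO_p :: "nat \<Rightarrow> rat \<Rightarrow> bool" where
  "bigO_p p q \<longleftrightarrow> in_Zp p (q / of_nat p)"

definition G_fun :: "nat \<Rightarrow> nat \<Rightarrow> nat \<Rightarrow> rat" where
  "G_fun p i l =
     (\<Sum>k=1..l. (-1) ^ (k - 1) * of_nat (fact (k - 1)) * rstirling l k i)
     + of_nat p * of_nat (fact l) / of_nat (fact (l + p - 1)) * rstirling (l + p - 1) p i"

end

theory Submission
  imports Defs "HOL-Computational_Algebra.Formal_Power_Series" "HOL-Number_Theory.Residues"
begin

unbundle fps_syntax

lemma inZp_frac: "\<not> int p dvd b \<Longrightarrow> in_Zp p (of_int a / of_int b)"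
  unfolding in_Zp_def by blast

lemma inZp_int: assumes "prime p" shows "in_Zp p (of_int a)"
proof -
  have "\<not> int p dvd 1" using prime_gt_1_nat[OF assms] by simp
  then show ?thesis using inZp_frac[of p 1 a] by simp
qed

lemma inZp_add: assumes "prime p" "in_Zp p x" "in_Zp p y" shows "in_Zp p (x + y)"
proof -
  obtain a b where ab: "\<not> int p dvd b" "x = of_int a / of_int b" using assms(2) unfolding in_Zp_def by blast
  obtain c d where cd: "\<not> int p dvd d" "y = of_int c / of_int d" using assms(3) unfolding in_Zp_def by blast
  have b0: "b \<noteq> 0" "d \<noteq> 0" using ab cd by auto
  have pr: "prime (int p)" using assms(1) by simp
  have "\<not> int p dvd b * d" using ab cd pr by (simp add: prime_dvd_mult_iff)
  moreover have "x + y = of_int (a * d + c * b) / of_int (b * d)" using ab cd b0 by (simp add: field_simps)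
  ultimately show ?thesis unfolding in_Zp_def by blast
qed

lemma inZp_mult: assumes "prime p" "in_Zp p x" "in_Zp p y" shows "in_Zp p (x * y)"
proof -
  obtain a b where ab: "\<not> int p dvd b" "x = of_int a / of_int b" using assms(2) unfolding in_Zp_def by blast
  obtain c d where cd: "\<not> int p dvd d" "y = of_int c / of_int d" using assms(3) unfolding in_Zp_def by blast
  have pr: "prime (int p)" using assms(1) by simp
  have "\<not> int p dvd b * d" using ab cd pr by (simp add: prime_dvd_mult_iff)
  moreover have "x * y = of_int (a * c) / of_int (b * d)" using ab cd by simp
  ultimately show ?thesis unfolding in_Zp_def by blast
qed

lemma inZp_sum: assumes "prime p" "\<And>x. x \<in> A \<Longrightarrow> in_Zp p (f x)" shows "in_Zp p (\<Sum>x\<in>A. f x)"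
  using assms(2)
proof (induction A rule: infinite_finite_induct)
  case (infinite A) then show ?case using inZp_int[OF assms(1), of 0] by simp
next
  case empty then show ?case using inZp_int[OF assms(1), of 0] by simp
next
  case (insert x F) then show ?case using inZp_add[OF assms(1)] by simp
qed

lemma bigO_inZp: assumes "prime p" "bigO_p p x" shows "in_Zp p x"
proof -
  have "x = of_int (int p) * (x / of_nat p)" using assms(1) by (simp add: prime_gt_0_nat)
  then show ?thesis using inZp_mult[OF assms(1) inZp_int[OF assms(1)]] assms(2) unfolding bigO_p_def by metis
qed

lemma fps_pow_X: fixes f :: "'a::comm_ring_1 fps" assumes "f $ 0 = 0"
  shows "(f ^ n) $ k = (if k < n then 0 else (fps_shift 1 f ^ n) $ (k - n))"
    and "(f ^ n) $ n = (f $ 1) ^ n"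
proof -
  have "f = fps_shift 1 f * fps_X"
  proof (cases "f = 0")
    case False
    then have "1 \<le> subdegree f" using assms subdegree_eq_0_iff by (metis less_one not_le)
    then show ?thesis using fps_shift_times_fps_X[of f] by simp
  qed simp
  then have e: "f ^ n = fps_shift 1 f ^ n * fps_X ^ n" by (metis power_mult_distrib)
  show "(f ^ n) $ k = (if k < n then 0 else (fps_shift 1 f ^ n) $ (k - n))"
    by (subst e) (simp add: fps_X_power_mult_right_nth)
  show "(f ^ n) $ n = (f $ 1) ^ n"
    by (subst e) (simp add: fps_X_power_mult_right_nth fps_nth_power_0)
qed

definition Tset :: "nat set \<Rightarrow> nat \<Rightarrow> nat \<Rightarrow> (nat \<Rightarrow> nat) set" where
  "Tset M N k = {j \<in> PiE M (\<lambda>_. {0..N}). (\<Sum>m\<in>M. j m) = k \<and> (\<Sum>m\<in>M. m * j m) = N}"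

definition wt :: "nat set \<Rightarrow> (nat \<Rightarrow> nat) \<Rightarrow> rat" where
  "wt M j = 1 / (\<Prod>m\<in>M. of_nat (fact (j m)) * of_nat (fact m) ^ (j m))"

definition T :: "nat set \<Rightarrow> nat \<Rightarrow> nat \<Rightarrow> rat" where
  "T M N k = (\<Sum>j\<in>Tset M N k. wt M j)"

definition P :: "nat set \<Rightarrow> rat fps" where
  "P M = (\<Sum>m\<in>M. fps_const (1 / of_nat (fact m)) * fps_X ^ m)"

lemma Tset_bound:
  assumes "finite M" "0 \<notin> M" "N \<le> B"
  shows "Tset M N k = {j \<in> PiE M (\<lambda>_. {0..B}). (\<Sum>m\<in>M. j m) = k \<and> (\<Sum>m\<in>M. m * j m) = N}"
proof -
  have "j x \<le> N" if "(\<Sum>m\<in>M. m * j m) = N" "x \<in> M" for j x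
  proof -
    have "x * j x \<le> (\<Sum>m\<in>M. m * j m)" using assms(1) that(2) by (intro member_le_sum) auto
    moreover have "j x \<le> x * j x" using assms(2) that(2) by (cases x) auto
    ultimately show ?thesis using that(1) by linarith
  qed
  then have "j x \<le> B" if "(\<Sum>m\<in>M. m * j m) = N" "x \<in> M" for j x
    using that assms(3) le_trans by blast
  with \<open>\<And>j x. (\<Sum>m\<in>M. m * j m) = N \<Longrightarrow> x \<in> M \<Longrightarrow> j x \<le> N\<close>
  show ?thesis unfolding Tset_def using assms(3) by (auto simp: PiE_iff)
qed

lemma finite_Tset: "finite M \<Longrightarrow> finite (Tset M N k)"
  unfolding Tset_def by (rule finite_subset[of _ "PiE M (\<lambda>_. {0..N})"]) (auto intro: finite_PiE)

lemma T_empty: "T {} N k = (if N = 0 \<and> k = 0 then 1 else 0)"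
  by (auto simp: T_def Tset_def wt_def)

lemma P_nth: "finite M \<Longrightarrow> P M $ e = (if e \<in> M then 1 / of_nat (fact e) else 0)"
proof -
  have "(if e = k then 1 else 0) / (fact k :: rat) = (if k = e then 1 / fact e else 0)" for k by auto
  then show "finite M \<Longrightarrow> P M $ e = (if e \<in> M then 1 / of_nat (fact e) else 0)"
    unfolding P_def by (simp add: fps_sum_nth sum.delta)
qed

lemma T_fps:
  assumes "finite M" "0 \<notin> M"
  shows "T M N k = (P M ^ k) $ N / of_nat (fact k)"
  using assms
proof (induction M arbitrary: N k rule: finite_induct)
  case empty
  show ?case by (cases k) (auto simp: T_empty P_def)
next
  case (insert m M N k)
  have m1: "m \<ge> 1" using insert.prems by (cases m) auto
  have M0: "0 \<notin> M" using insert.prems by auto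
  define B where "B = (\<lambda>_::nat. {0..N})"
  define C where "C = (\<lambda>j. (\<Sum>x\<in>insert m M. j x) = k \<and> (\<Sum>x\<in>insert m M. x * j x) = N)"
  have "T (insert m M) N k = (\<Sum>j\<in>PiE (insert m M) B. if C j then wt (insert m M) j else 0)"
    unfolding T_def Tset_def B_def C_def
    by (rule sum.inter_filter) (use insert.hyps in \<open>auto intro: finite_PiE\<close>)
  also have "\<dots> = (\<Sum>(a, g)\<in>B m \<times> PiE M B. if C (g(m := a)) then wt (insert m M) (g(m := a)) else 0)"
    unfolding PiE_insert_eq
    by (subst sum.reindex[OF inj_combinator[OF insert.hyps(2)]]) (simp add: case_prod_unfold)
  also have "\<dots> = (\<Sum>a\<in>{0..N}. \<Sum>g\<in>PiE M B. if C (g(m := a)) then wt (insert m M) (g(m := a)) else 0)"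
    unfolding B_def by (subst sum.cartesian_product) (simp add: case_prod_unfold)
  also have "\<dots> = (\<Sum>a\<in>{0..N}. if a \<le> k \<and> m * a \<le> N then
        1 / (of_nat (fact a) * of_nat (fact m) ^ a) * T M (N - m * a) (k - a) else 0)"
  proof (rule sum.cong[OF refl])
    fix a assume "a \<in> {0..N}"
    have eqs: "(\<Sum>x\<in>insert m M. (g(m := a)) x) = a + (\<Sum>x\<in>M. g x)"
       "(\<Sum>x\<in>insert m M. x * (g(m := a)) x) = m * a + (\<Sum>x\<in>M. x * g x)"
       "wt (insert m M) (g(m := a)) = 1 / (of_nat (fact a) * of_nat (fact m) ^ a) * wt M g" for g
    proof -
      have "(\<Sum>x\<in>M. (g(m := a)) x) = (\<Sum>x\<in>M. g x)"
        using insert.hyps(2) by (intro sum.cong) auto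
      then show "(\<Sum>x\<in>insert m M. (g(m := a)) x) = a + (\<Sum>x\<in>M. g x)"
        using insert.hyps by simp
      have "(\<Sum>x\<in>M. x * (g(m := a)) x) = (\<Sum>x\<in>M. x * g x)"
        using insert.hyps(2) by (intro sum.cong) auto
      then show "(\<Sum>x\<in>insert m M. x * (g(m := a)) x) = m * a + (\<Sum>x\<in>M. x * g x)"
        using insert.hyps by simp
      have "(\<Prod>x\<in>M. of_nat (fact ((g(m := a)) x)) * of_nat (fact x) ^ ((g(m := a)) x) :: rat)
          = (\<Prod>x\<in>M. of_nat (fact (g x)) * of_nat (fact x) ^ (g x))"
        using insert.hyps(2) by (intro prod.cong) auto
      then show "wt (insert m M) (g(m := a)) = 1 / (of_nat (fact a) * of_nat (fact m) ^ a) * wt M g"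
        using insert.hyps unfolding wt_def by simp
    qed
    show "(\<Sum>g\<in>PiE M B. if C (g(m := a)) then wt (insert m M) (g(m := a)) else 0) =
      (if a \<le> k \<and> m * a \<le> N then 1 / (of_nat (fact a) * of_nat (fact m) ^ a) * T M (N - m * a) (k - a) else 0)"
    proof (cases "a \<le> k \<and> m * a \<le> N")
      case True
      have "T M (N - m * a) (k - a) = (\<Sum>g\<in>{j \<in> PiE M B. (\<Sum>x\<in>M. j x) = k - a \<and> (\<Sum>x\<in>M. x * j x) = N - m * a}. wt M g)"
        unfolding T_def B_def by (subst Tset_bound[OF insert.hyps(1) M0, of _ N]) auto
      also have "\<dots> = (\<Sum>g\<in>PiE M B. if (\<Sum>x\<in>M. g x) = k - a \<and> (\<Sum>x\<in>M. x * g x) = N - m * a then wt M g else 0)"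
        by (rule sum.inter_filter) (use insert.hyps in \<open>auto intro: finite_PiE simp: B_def\<close>)
      finally have 1: "T M (N - m * a) (k - a) = \<dots>" .
      have 2: "C (g(m := a)) \<longleftrightarrow> (\<Sum>x\<in>M. g x) = k - a \<and> (\<Sum>x\<in>M. x * g x) = N - m * a" for g
        unfolding C_def eqs using True by auto
      have "(\<Sum>g\<in>PiE M B. if C (g(m := a)) then wt (insert m M) (g(m := a)) else 0) =
        (\<Sum>g\<in>PiE M B. 1 / (of_nat (fact a) * of_nat (fact m) ^ a) *
           (if (\<Sum>x\<in>M. g x) = k - a \<and> (\<Sum>x\<in>M. x * g x) = N - m * a then wt M g else 0))"
        unfolding 2 eqs by (intro sum.cong) auto
      then show ?thesis using True unfolding 1 sum_distrib_left by simp
    next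
      case False
      have nC: "\<not> C (g(m := a))" for g unfolding C_def eqs using False by auto
      have l: "(\<Sum>g\<in>PiE M B. if C (g(m := a)) then wt (insert m M) (g(m := a)) else 0) = 0"
        using nC by simp
      show ?thesis unfolding l by (rule if_not_P[OF False, symmetric])
    qed
  qed
  also have "\<dots> = (\<Sum>a\<in>{a. a \<le> k \<and> m * a \<le> N}.
        1 / (of_nat (fact a) * of_nat (fact m) ^ a) * T M (N - m * a) (k - a))"
  proof -
    have am: "a \<le> m * a" for a using m1 by simp
    have "{a. a \<le> k \<and> m * a \<le> N} = {a \<in> {0..N}. a \<le> k \<and> m * a \<le> N}"
    proof (rule Collect_cong)
      fix x show "(x \<le> k \<and> m * x \<le> N) \<longleftrightarrow> (x \<in> {0..N} \<and> x \<le> k \<and> m * x \<le> N)"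
        using le_trans[OF am[of x], of N] by auto
    qed
    then show ?thesis by (simp only:) (rule sum.inter_filter[symmetric], simp)
  qed
  also have "\<dots> = (P (insert m M) ^ k) $ N / of_nat (fact k)"
  proof -
    define c where "c = fps_const (1 / of_nat (fact m) :: rat) * fps_X ^ m"
    have Pi: "P (insert m M) = c + P M" unfolding P_def c_def using insert.hyps by simp
    have trm: "(of_nat (k choose a) * c ^ a * P M ^ (k - a)) $ N =
        of_nat (k choose a) * (1 / of_nat (fact m)) ^ a * (if N < m * a then 0 else (P M ^ (k - a)) $ (N - m * a))" for a
    proof -
      have e: "of_nat (k choose a) * c ^ a * P M ^ (k - a) =
          fps_const (of_nat (k choose a) * (1 / of_nat (fact m)) ^ a) * (fps_X ^ (m * a) * P M ^ (k - a))"
      proof -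
        have ca: "c ^ a = fps_const ((1 / of_nat (fact m)) ^ a) * fps_X ^ (m * a)"
          unfolding c_def power_mult_distrib fps_const_power power_mult ..
        show ?thesis unfolding ca
          by (simp only: fps_of_nat[symmetric] fps_const_mult[symmetric] mult_ac)
      qed
      show ?thesis unfolding e fps_mult_left_const_nth fps_X_power_mult_nth by simp
    qed
    have "(P (insert m M) ^ k) $ N / of_nat (fact k) =
       (\<Sum>a\<le>k. of_nat (k choose a) * (1 / of_nat (fact m)) ^ a * (if N < m * a then 0 else (P M ^ (k - a)) $ (N - m * a)) / of_nat (fact k))"
      unfolding Pi binomial_ring fps_sum_nth trm by (simp add: sum_divide_distrib)
    also have "\<dots> = (\<Sum>a\<le>k. if m * a \<le> N then 1 / (of_nat (fact a) * of_nat (fact m) ^ a) * T M (N - m * a) (k - a) else 0)"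
    proof (rule sum.cong[OF refl])
      fix a assume a: "a \<in> {..k}"
      have f: "of_nat (fact k) = (of_nat (k choose a) * of_nat (fact a) * of_nat (fact (k - a)) :: rat)"
      proof -
        have "fact k = (k choose a) * fact a * (fact (k - a) :: nat)"
          using binomial_fact_lemma[of a k] a by (simp add: mult_ac)
        then have "(of_nat (fact k) :: rat) = of_nat ((k choose a) * fact a * fact (k - a))" by (rule arg_cong)
        then show ?thesis by (simp only: of_nat_mult)
      qed
      show "of_nat (k choose a) * (1 / of_nat (fact m)) ^ a * (if N < m * a then 0 else (P M ^ (k - a)) $ (N - m * a)) / of_nat (fact k) =
         (if m * a \<le> N then 1 / (of_nat (fact a) * of_nat (fact m) ^ a) * T M (N - m * a) (k - a) else 0)"
        unfolding insert.IH[OF M0] f using a by (auto simp: field_simps power_divide)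
    qed
    also have "\<dots> = (\<Sum>a\<in>{a. a \<le> k \<and> m * a \<le> N}. 1 / (of_nat (fact a) * of_nat (fact m) ^ a) * T M (N - m * a) (k - a))"
    proof -
      have "{a. a \<le> k \<and> m * a \<le> N} = {a \<in> {..k}. m * a \<le> N}" by auto
      then show ?thesis by (simp only:) (rule sum.inter_filter[symmetric], simp)
    qed
    finally show ?thesis by simp
  qed
  finally show ?case .
qed

lemma rstirling_fps: "rstirling N k r = of_nat (fact N) * (P {1..r} ^ k) $ N / of_nat (fact k)"
proof -
  have "rstirling N k r = of_nat (fact N) * T {1..r} N k"
    unfolding rstirling_def T_def Tset_def wt_def by (simp add: sum_distrib_left)
  then show ?thesis by (simp add: T_fps)
qed

definition Lf :: "nat \<Rightarrow> rat fps \<Rightarrow> rat fps" where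
  "Lf n f = (\<Sum>k\<in>{1..n}. fps_const ((-1) ^ (k - 1) / of_nat k) * f ^ k)"

definition Qf :: "nat \<Rightarrow> rat fps \<Rightarrow> rat fps" where
  "Qf n f = (\<Sum>k\<in>{1..n}. fps_const ((-1) ^ (k - 1)) * f ^ (k - 1))"

lemma Lf_deriv: "fps_deriv (Lf n f) = fps_deriv f * Qf n f"
proof -
  have "fps_deriv (fps_const ((-1) ^ (k - 1) / of_nat k) * f ^ k) = fps_deriv f * (fps_const ((-1) ^ (k - 1)) * f ^ (k - 1))"
    if "k \<in> {1..n}" for k
  proof -
    have k: "k \<noteq> 0" using that by auto
    have "fps_const ((-1) ^ (k - 1) / of_nat k) * (of_nat k :: rat fps) = fps_const ((-1) ^ (k - 1))"
      using k by (simp flip: fps_of_nat)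
    then show ?thesis by (simp add: fps_deriv_power' mult_ac)
  qed
  then show ?thesis unfolding Lf_def Qf_def by (simp add: fps_deriv_sum sum_distrib_left)
qed

lemma Qf_tele: "(1 + f) * Qf n f = 1 - fps_const ((-1) ^ n) * f ^ n"
proof (induction n)
  case 0 then show ?case by (simp add: Qf_def)
next
  case (Suc n)
  have "Qf (Suc n) f = Qf n f + fps_const ((-1) ^ n) * f ^ n"
    unfolding Qf_def by simp
  then show ?case using Suc by (simp add: algebra_simps fps_const_neg[symmetric] del: fps_const_neg)
qed

lemma fps_coeff_rec:
  fixes f :: "rat fps"
  assumes f0: "f $ 0 = 0" and d: "d < n"
  shows "fps_deriv (Lf n f) $ d + (\<Sum>e=0..d. f $ e * fps_deriv (Lf n f) $ (d - e)) = fps_deriv f $ d"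
proof -
  have "(1 + f) * fps_deriv (Lf n f) = fps_deriv f * ((1 + f) * Qf n f)"
    unfolding Lf_deriv by (simp only: mult_ac)
  also have "\<dots> = fps_deriv f * (1 - fps_const ((-1) ^ n) * f ^ n)" by (simp only: Qf_tele)
  also have "\<dots> = fps_deriv f - fps_deriv f * (fps_const ((-1) ^ n) * f ^ n)" by (simp only: right_diff_distrib mult_1_right)
  finally have "(1 + f) * fps_deriv (Lf n f) = fps_deriv f - fps_deriv f * (fps_const ((-1) ^ n) * f ^ n)" .
  then have "((1 + f) * fps_deriv (Lf n f)) $ d = fps_deriv f $ d - (fps_deriv f * (fps_const ((-1) ^ n) * f ^ n)) $ d"
    by simp
  also have "(fps_deriv f * (fps_const ((-1) ^ n) * f ^ n)) $ d = 0"
  proof -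
    have z: "(fps_const ((-1) ^ n) * f ^ n) $ k = 0" if "k < n" for k
      using that by (simp add: fps_pow_X(1)[OF f0])
    show ?thesis unfolding fps_mult_nth[of "fps_deriv f"] using d z by (intro sum.neutral) auto
  qed
  finally show ?thesis by (simp add: distrib_right fps_mult_nth)
qed

lemma Lf_main:
  fixes r :: nat
  assumes r: "1 \<le> r"
  defines "f \<equiv> P {1..r}"
  shows "d < n \<Longrightarrow> d \<le> r \<Longrightarrow> fps_deriv (Lf n f) $ d = (if d = 0 then 1 else if d = r then - 1 / of_nat (fact r) else 0)"
proof (induction d rule: less_induct)
  case (less d)
  define L' where "L' = fps_deriv (Lf n f)"
  have fe: "f $ e = (if 1 \<le> e \<and> e \<le> r then 1 / of_nat (fact e) else 0)" for e
    unfolding f_def by (simp add: P_nth)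
  have f0: "f $ 0 = 0" using fe by simp
  have fd: "fps_deriv f $ d = (if d < r then 1 / of_nat (fact d) else 0)"
  proof -
    have fs: "(fact (Suc d) :: rat) = of_nat (Suc d) * fact d" by (rule fact_Suc)
    have "fps_deriv f $ d = of_nat (Suc d) * f $ Suc d" by simp
    also have "\<dots> = (if d < r then 1 / of_nat (fact d) else 0)"
      using fe[of "Suc d"] unfolding of_nat_fact fs by (simp del: of_nat_Suc)
    finally show ?thesis .
  qed
  have E: "L' $ d + (\<Sum>e=0..d. f $ e * L' $ (d - e)) = fps_deriv f $ d"
    unfolding L'_def by (rule fps_coeff_rec[OF f0 less.prems(1)])
  have S: "(\<Sum>e=0..d. f $ e * L' $ (d - e)) = (if d = 0 then 0 else 1 / of_nat (fact d))"
  proof (cases "d = 0")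
    case True then show ?thesis using f0 by simp
  next
    case False
    have "(\<Sum>e=0..d. f $ e * L' $ (d - e)) = (\<Sum>e=0..d. if e = d then 1 / of_nat (fact d) else 0)"
    proof (rule sum.cong[OF refl])
      fix e assume e: "e \<in> {0..d}"
      show "f $ e * L' $ (d - e) = (if e = d then 1 / of_nat (fact d) else 0)"
      proof (cases "e = 0")
        case True then show ?thesis using f0 False by simp
      next
        case e0: False
        have IH: "L' $ (d - e) = (if d - e = 0 then 1 else if d - e = r then - 1 / of_nat (fact r) else 0)"
          unfolding L'_def using less.prems e e0 by (intro less.IH) auto
        show ?thesis
        proof (cases "e = d")
          case True then show ?thesis using IH fe less.prems e0 by simp
        next
          case False
          then have "d - e \<noteq> 0" "d - e \<noteq> r" using e e0 less.prems by auto
          then show ?thesis using IH False by simp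
        qed
      qed
    qed
    then show ?thesis using False by simp
  qed
  show ?case using E S fd less.prems r unfolding L'_def[symmetric] by (auto split: if_splits)
qed

lemma first_sum:
  fixes i l :: nat
  assumes "1 \<le> i" "1 \<le> l" "l \<le> i + 1"
  shows "(\<Sum>k=1..l. (-1) ^ (k - 1) * of_nat (fact (k - 1)) * rstirling l k i)
     = (if l = 1 then 1 else if l = i + 1 then -1 else 0)"
proof -
  define f where "f = P {1..i}"
  have "(\<Sum>k=1..l. (-1) ^ (k - 1) * of_nat (fact (k - 1)) * rstirling l k i)
      = of_nat (fact l) * Lf l f $ l"
    unfolding Lf_def fps_sum_nth sum_distrib_left rstirling_fps f_def
  proof (rule sum.cong[OF refl])
    fix k assume k: "k \<in> {1..l}"
    have "of_nat (fact k) = (of_nat k * of_nat (fact (k - 1)) :: rat)"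
      using k by (cases k) (auto simp: algebra_simps)
    then show "(-1) ^ (k - 1) * of_nat (fact (k - 1)) * (of_nat (fact l) * (P {1..i} ^ k) $ l / of_nat (fact k)) =
      of_nat (fact l) * (fps_const ((-1) ^ (k - 1) / of_nat k) * P {1..i} ^ k) $ l"
      using k by (simp add: field_simps)
  qed
  also have "Lf l f $ l = fps_deriv (Lf l f) $ (l - 1) / of_nat l"
    using assms by (simp add: fps_deriv_nth)
  also have "fps_deriv (Lf l f) $ (l - 1) = (if l - 1 = 0 then 1 else if l - 1 = i then - 1 / of_nat (fact i) else 0)"
    unfolding f_def using assms by (intro Lf_main) auto
  finally have eq: "(\<Sum>k=1..l. (-1) ^ (k - 1) * of_nat (fact (k - 1)) * rstirling l k i) =
     of_nat (fact l) * ((if l - 1 = 0 then 1 else if l - 1 = i then - 1 / of_nat (fact i) else 0) / of_nat l)" .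
  show ?thesis
  proof (cases "l = 1")
    case True then show ?thesis unfolding eq by simp
  next
    case l1: False
    show ?thesis
    proof (cases "l = i + 1")
      case True
      have "(fact (i + 1) :: rat) = of_nat (i + 1) * fact i" by (metis fact_Suc Suc_eq_plus1)
      have n1: "(fact i :: rat) \<noteq> 0" "(of_nat (i + 1) :: rat) \<noteq> 0" by auto
      have X: "of_nat (fact (i + 1)) * ((- 1 / of_nat (fact i)) / of_nat (i + 1)) = (-1 :: rat)"
        unfolding of_nat_fact \<open>(fact (i + 1) :: rat) = of_nat (i + 1) * fact i\<close>
        using n1 by (simp only: field_simps) simp
      moreover have A: "(if l - 1 = 0 then 1 else if l - 1 = i then - 1 / of_nat (fact i) else 0) = - 1 / (of_nat (fact i) :: rat)"
        using True assms(1) by simp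
      moreover have B: "(if l = 1 then 1 else if l = i + 1 then -1 else 0) = (-1::rat)" using True l1 by simp
      show ?thesis unfolding eq A B unfolding True by (fact X)
    next
      case False
      then have "l - 1 \<noteq> i" "l - 1 \<noteq> 0" using assms l1 by auto
      then show ?thesis unfolding eq using False l1 by simp
    qed
  qed
qed

lemma jbound:
  fixes p i N :: nat
  assumes j: "j \<in> Tset {1..i} N p" and N: "N < 2 * p" "N \<noteq> p" and m: "m \<in> {1..i}"
  shows "j m < p"
proof (rule ccontr)
  assume "\<not> j m < p"
  then have jm: "p \<le> j m" by simp
  have s1: "(\<Sum>x\<in>{1..i}. j x) = p" and s2: "(\<Sum>x\<in>{1..i}. x * j x) = N"
    using j unfolding Tset_def by auto
  have "m * j m \<le> N" using s2 m by (metis finite_atLeastAtMost member_le_sum zero_le)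
  then have "m * p < 2 * p" using jm N(1) by (meson le_less_trans mult_le_mono2)
  then have "m < 2" by simp
  with m have m1: "m = 1" by auto
  have i1: "1 \<in> {1..i}" using m by auto
  have s1': "j 1 + (\<Sum>x\<in>{1..i} - {1}. j x) = p" using s1 sum.remove[OF _ i1, of j] by simp
  have "p \<le> j 1" using jm m1 by simp
  then have "(\<Sum>x\<in>{1..i} - {1}. j x) = 0" using s1' by linarith
  then have z: "\<forall>x\<in>{1..i} - {1}. j x = 0" by simp
  have "(\<Sum>x\<in>{1..i} - {1}. x * j x) = 0" using z by simp
  then have "N = j 1" using s2 sum.remove[OF _ i1, of "\<lambda>x. x * j x"] by simp
  moreover have "j 1 = p" using s1' \<open>(\<Sum>x\<in>{1..i} - {1}. j x) = 0\<close> by simp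
  ultimately show False using N(2) by simp
qed

lemma D_coprime:
  fixes p i N :: nat
  assumes pr: "prime p" and ip: "i < p" and jb: "\<And>m. m \<in> {1..i} \<Longrightarrow> j m < p"
  shows "\<not> int p dvd int (\<Prod>m\<in>{1..i}. fact (j m) * fact m ^ (j m))"
proof
  assume "int p dvd int (\<Prod>m\<in>{1..i}. fact (j m) * fact m ^ (j m))"
  then have "p dvd (\<Prod>m\<in>{1..i}. fact (j m) * fact m ^ (j m))" by (simp only: int_dvd_int_iff)
  then have "\<exists>x\<in>{1..i}. p dvd fact (j x) * fact x ^ (j x)"
    using iffD1[OF prime_dvd_prod_iff[OF finite_atLeastAtMost pr]] by blast
  then obtain m where m: "m \<in> {1..i}" and d: "p dvd fact (j m) * fact m ^ (j m)" by blast
  then have "p dvd fact (j m) \<or> p dvd fact m ^ (j m)" using pr prime_dvd_mult_iff by blast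
  then show False
  proof
    assume "p dvd fact (j m)" then have "p \<le> j m" using prime_dvd_fact_iff[OF pr] by simp
    then show False using jb[OF m] by simp
  next
    assume "p dvd fact m ^ (j m)" then have "p dvd fact m" using prime_dvd_power[OF pr] by blast
    then have "p \<le> m" using prime_dvd_fact_iff[OF pr] by simp
    then show False using m ip by simp
  qed
qed

theorem proposition3p17:
  fixes p i l :: nat
  assumes "prime p" and "odd p"
    and "1 \<le> i" and "i < p - 1"
    and "1 \<le> l" and "l \<le> i + 1"
  shows "in_Zp p (G_fun p i l)
       \<and> (l = i + 1 \<longrightarrow> bigO_p p (G_fun p i l + 1))
       \<and> (l \<le> i \<longrightarrow> bigO_p p (G_fun p i l))"
proof -
  have pr: "prime p" by fact
  have p0: "p > 0" using pr prime_gt_0_nat by blast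
  define N where "N = l + p - 1"
  define A where "A = (\<Sum>k=1..l. (-1) ^ (k - 1) * of_nat (fact (k - 1)) * rstirling l k i :: rat)"
  define S where "S = of_nat p * of_nat (fact l) / of_nat (fact N) * rstirling N p i"
  have G: "G_fun p i l = A + S" unfolding G_fun_def A_def S_def N_def by simp
  have Aval: "A = (if l = 1 then 1 else if l = i + 1 then -1 else 0)"
    unfolding A_def using assms by (intro first_sum) auto
  show ?thesis
  proof (cases "l = 1")
    case True
    have NP: "N = p" unfolding N_def using True p0 by simp
    have f1: "(P {1..i} ^ p) $ p = 1"
    proof -
      have "P {1..i} $ 0 = 0" by (simp add: P_nth)
      then have "(P {1..i} ^ p) $ p = (P {1..i} $ 1) ^ p" by (rule fps_pow_X(2))
      also have "P {1..i} $ 1 = 1" using assms(3) by (simp add: P_nth)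
      finally show ?thesis by simp
    qed
    have "rstirling p p i = 1" unfolding rstirling_fps f1 by simp
    then have S: "S = of_nat p / of_nat (fact p)" unfolding S_def NP True by simp
    obtain t where t: "fact (p - 1) + 1 = int p * t"
      using wilson_theorem[OF pr] unfolding cong_iff_dvd_diff by (auto elim!: dvdE)
    have fp: "(fact p :: rat) = of_nat p * fact (p - 1)"
      using p0 by (metis Suc_diff_1 fact_Suc)
    have fnz: "(fact (p - 1) :: rat) \<noteq> 0" by simp
    have "(G_fun p i l) / of_nat p = of_int t / of_int (fact (p - 1))"
    proof -
      have "(G_fun p i l) / of_nat p = (1 + of_nat p / (of_nat p * fact (p - 1))) / of_nat p"
        unfolding G Aval S using True fp by simp
      also have "\<dots> = (fact (p - 1) + 1) / (of_nat p * fact (p - 1))"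
        using p0 fnz by (simp add: field_simps)
      also have "(fact (p - 1) + 1 :: rat) = of_int (fact (p - 1) + 1)" by simp
      also have "\<dots> = of_nat p * of_int t" unfolding t by simp
      finally show ?thesis using p0 fnz by simp
    qed
    moreover have "\<not> int p dvd fact (p - 1)"
    proof
      assume "int p dvd fact (p - 1)"
      then have "p dvd fact (p - 1)" by (metis int_dvd_int_iff of_nat_fact)
      then show False using prime_dvd_fact_iff[OF pr] p0 by simp
    qed
    ultimately have "bigO_p p (G_fun p i l)" unfolding bigO_p_def by (metis inZp_frac)
    then show ?thesis using bigO_inZp[OF pr] True assms(3) by simp
  next
    case False
    then have l2: "2 \<le> l" using assms by simp
    have N: "N < 2 * p" "N \<noteq> p" unfolding N_def using assms l2 by auto
    have ip: "i < p" using assms by simp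
    have "rstirling N p i = (\<Sum>j\<in>Tset {1..i} N p. of_nat (fact N) / (\<Prod>m=1..i. of_nat (fact (j m)) * of_nat (fact m) ^ (j m)))"
      unfolding rstirling_def Tset_def by simp
    then have "S / of_nat p = (\<Sum>j\<in>Tset {1..i} N p. of_nat (fact l) / (\<Prod>m=1..i. of_nat (fact (j m)) * of_nat (fact m) ^ (j m)))"
      unfolding S_def using p0 by (simp add: sum_distrib_left sum_divide_distrib)
    moreover have "in_Zp p (\<Sum>j\<in>Tset {1..i} N p. of_nat (fact l) / (\<Prod>m=1..i. of_nat (fact (j m)) * of_nat (fact m) ^ (j m)))"
    proof (rule inZp_sum[OF pr])
      fix j assume j: "j \<in> Tset {1..i} N p"
      have e1: "(\<Prod>m=1..i. of_nat (fact (j m)) * of_nat (fact m) ^ (j m) :: rat)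
          = of_int (int (\<Prod>m\<in>{1..i}. fact (j m) * fact m ^ (j m)))" by simp
      have e2: "(of_nat (fact l) :: rat) = of_int (int (fact l))" by simp
      show "in_Zp p (of_nat (fact l) / (\<Prod>m=1..i. of_nat (fact (j m)) * of_nat (fact m) ^ (j m)))"
        unfolding e1 e2 by (rule inZp_frac[OF D_coprime[OF pr ip jbound[OF j N]]])
    qed
    ultimately have bS: "bigO_p p S" unfolding bigO_p_def by simp
    show ?thesis
    proof (cases "l = i + 1")
      case True
      have "G_fun p i l + 1 = S" unfolding G Aval using True False by simp
      moreover have "G_fun p i l = S + of_int (-1)" unfolding G Aval using True False by simp
      ultimately have bG: "bigO_p p (G_fun p i l + 1)" and eG: "G_fun p i l = (G_fun p i l + 1) + of_int (-1)"
        using bS by simp_all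
      have "in_Zp p (G_fun p i l)"
        by (subst eG, rule inZp_add[OF pr bigO_inZp[OF pr bG] inZp_int[OF pr]])
      then show ?thesis using bG True by simp
    next
      case l': False
      have "G_fun p i l = S" unfolding G Aval using l' False by simp
      then show ?thesis using bS bigO_inZp[OF pr] l' assms by auto
    qed
  qed
qed

end
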